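(* Consider the network and loss $\mathcal{L}$ from the context with $|J|=1$. If $\overline{\mathbf{P}}$ is a stationary point of $\mathcal{L}$ that is not a local minimum, then there exist a unit vector $\boldsymbol{\ell}\in\mathbb{R}^D$ and a constant $C<0$ such that $\mathcal{L}(\overline{\mathbf{P}}+\delta\boldsymbol{\ell})-\mathcal{L}(\overline{\mathbf{P}})<0$ for all sufficiently small $\delta>0$ and $\mathcal{L}(\overline{\mathbf{P}}+\delta\boldsymbol{\ell})-\mathcal{L}(\overline{\mathbf{P}})\sim C\delta^2$ as $\delta\to0^+$.
   Context: Fix an integer $d>1$, finite index sets $I$ (hidden neurons), $J$ (output neurons), $K$ (samples), reals $\alpha^+\neq\alpha^-$, and $\rho(z)=\alpha^+z$ for $z\ge0$, $\rho(z)=\alpha^-z$ for $z<0$ (componentwise). Parameters $\mathbf{P}=(W,H)\in\mathbb{R}^D$, $D=|J||I|+|I|d$, $W\in\mathbb{R}^{|I|\times d}$ with rows $\mathbf{w}_i$, $H=(h_{ji})\in\mathbb{R}^{|J|\times|I|}$; output $\hat{\mathbf{y}}(\mathbf{P};\mathbf{x})=H\rho(W\mathbf{x})$; training data $\mathbf{x}_k\in\mathbb{R}^d$, $\mathbf{y}_k\in\mathbb{R}^{|J|}$, $k\in K$; loss $\mathcal{L}(\mathbf{P})=\frac12\sum_{k\in K}\|\hat{\mathbf{y}}(\mathbf{P};\mathbf{x}_k)-\mathbf{y}_k\|^2$. A point $\overline{\mathbf{P}}$ is a stationary point if $\lim_{\alpha\to0^+}\frac{\mathcal{L}(\overline{\mathbf{P}}+\alpha\mathbf{d})-\mathcal{L}(\overline{\mathbf{P}})}{\alpha}\ge0$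 for all $\mathbf{d}\in\mathbb{R}^D$. *)

theory Defs
  imports "HOL-Analysis.Analysis" "HOL-Library.Landau_Symbols"
begin

definition rho :: "real \<Rightarrow> real \<Rightarrow> real \<Rightarrow> real" where
  "rho ap am z = (if z \<ge> 0 then ap * z else am * z)"

text \<open>Parameters P = (W, h): W has rows w_i in R^d (i in I), h = H in R^{1 x I} (|J| = 1).
  Network output yhat(P; x) = sum_i h_i rho(w_i . x).\<close>
definition net_out ::
  "real \<Rightarrow> real \<Rightarrow> (real^'d^'i) \<times> (real^'i) \<Rightarrow> real^'d \<Rightarrow> real" where
  "net_out ap am P x = (\<Sum>i\<in>UNIV. (snd P) $ i * rho ap am ((fst P $ i) \<bullet> x))"

definition loss ::
  "real \<Rightarrow> real \<Rightarrow> 'k set \<Rightarrow> ('k \<Rightarrow> real^'d) \<Rightarrow> ('k \<Rightarrow> real)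
     \<Rightarrow> (real^'d^'i) \<times> (real^'i) \<Rightarrow> real" where
  "loss ap am K xs ys P = (1/2) * (\<Sum>k\<in>K. (net_out ap am P (xs k) - ys k)^2)"

definition stationary_point :: "('a::real_normed_vector \<Rightarrow> real) \<Rightarrow> 'a \<Rightarrow> bool" where
  "stationary_point L P \<longleftrightarrow>
     (\<forall>dir. \<exists>g. ((\<lambda>\<alpha>. (L (P + \<alpha> *\<^sub>R dir) - L P) / \<alpha>) \<longlongrightarrow> g) (at_right 0) \<and> g \<ge> 0)"

definition local_minimum :: "('a::metric_space \<Rightarrow> real) \<Rightarrow> 'a \<Rightarrow> bool" where
  "local_minimum L P \<longleftrightarrow> (\<exists>e>0. \<forall>Q. dist Q P < e \<longrightarrow> L P \<le> L Q)"

end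

theory Submission imports Defs "HOL-Library.Landau_Symbols" begin

lemma rho_hom:
  assumes "a = 0 \<or> (\<bar>b\<bar> < \<bar>a\<bar>)" "0 \<le> t" "t \<le> 1"
  shows "rho ap am (a + t * b) - rho ap am a = t * (rho ap am (a + b) - rho ap am a)"
proof (cases "a = 0")
  case True
  then show ?thesis using assms by (auto simp: rho_def mult_nonneg_nonneg zero_le_mult_iff algebra_simps)
next
  case False
  then have lt: "\<bar>b\<bar> < \<bar>a\<bar>" using assms by auto
  have tb: "\<bar>t*b\<bar> \<le> \<bar>b\<bar>" using assms by (simp add: abs_mult mult_left_le_one_le)
  show ?thesis
  proof (cases "a > 0")
    case True
    then have "a + b \<ge> 0" "a + t*b \<ge> 0" using lt tb by linarith+
    then show ?thesis using True by (simp add: rho_def algebra_simps)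
  next
    case F2: False
    then have "a < 0" using False by simp
    then have "\<not> a + b \<ge> 0" "\<not> a + t*b \<ge> 0" using lt tb by linarith+
    then show ?thesis using F2 by (simp add: rho_def algebra_simps)
  qed
qed

locale netloc =
  fixes ap am :: real and K :: "'k set" and xs :: "'k \<Rightarrow> real^'d" and ys :: "'k \<Rightarrow> real"
    and P :: "(real^'d^'i) \<times> (real^'i)"
begin

definition "rr k = net_out ap am P (xs k) - ys k"
definition "rh i k = rho ap am ((fst P $ i) \<bullet> xs k)"
definition "gg i k v = rho ap am ((fst P $ i + v) \<bullet> xs k) - rh i k"
definition "GG i v = (\<Sum>k\<in>K. rr k * gg i k v)"
definition "RR i = (\<Sum>k\<in>K. rr k * rh i k)"
definition "small i v \<longleftrightarrow> (\<forall>k\<in>K. fst P $ i \<bullet> xs k = 0 \<or> \<bar>v \<bullet> xs k\<bar> < \<bar>fst P $ i \<bullet> xs k\<bar>)"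
definition "EE V a k = (\<Sum>i\<in>UNIV. snd P $ i * gg i k (V $ i) + a $ i * rh i k)"
definition "BB V a k = (\<Sum>i\<in>UNIV. a $ i * gg i k (V $ i))"
definition "DD V a k = (\<Sum>i\<in>UNIV. (snd P $ i + a $ i) * gg i k (V $ i) + a $ i * rh i k)"

lemma gg0[simp]: "gg i k 0 = 0" by (simp add: gg_def rh_def)

lemma net_shift: "net_out ap am (P + (V,a)) x' = net_out ap am P x' + (\<Sum>i\<in>UNIV. (snd P $ i + a $ i) * (rho ap am ((fst P $ i + V $ i) \<bullet> x') - rho ap am (fst P $ i \<bullet> x')) + a $ i * rho ap am (fst P $ i \<bullet> x'))"
  by (simp add: net_out_def sum.distrib[symmetric] algebra_simps)

lemma loss_shift: "loss ap am K xs ys (P + (V,a)) - loss ap am K xs ys P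
   = (\<Sum>k\<in>K. rr k * DD V a k) + 1/2 * (\<Sum>k\<in>K. (DD V a k)^2)"
proof -
  have n: "net_out ap am (P + (V,a)) (xs k) = net_out ap am P (xs k) + DD V a k" for k
    by (simp add: net_shift DD_def gg_def rh_def)
  have "(net_out ap am (P + (V,a)) (xs k) - ys k)^2 - (net_out ap am P (xs k) - ys k)^2
      = 2 * (rr k * DD V a k) + (DD V a k)^2" for k
    by (simp add: n rr_def power2_eq_square algebra_simps)
  then show ?thesis
    by (simp add: loss_def sum_subtractf[symmetric] right_diff_distrib[symmetric] sum.distrib sum_distrib_left[symmetric] algebra_simps)
qed

lemma lin_part: "(\<Sum>k\<in>K. rr k * DD V a k) = (\<Sum>i\<in>UNIV. (snd P $ i + a $ i) * GG i (V $ i)) + (\<Sum>i\<in>UNIV. a $ i * RR i)"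
  unfolding DD_def GG_def RR_def
  by (simp add: sum_distrib_left sum.distrib[symmetric] algebra_simps sum.swap[of _ K])


lemma gg_hom: assumes "small i v" "k \<in> K" "0 \<le> t" "t \<le> 1"
  shows "gg i k (t *\<^sub>R v) = t * gg i k v"
proof -
  have c: "fst P $ i \<bullet> xs k = 0 \<or> \<bar>v \<bullet> xs k\<bar> < \<bar>fst P $ i \<bullet> xs k\<bar>" using assms unfolding small_def by auto
  show ?thesis using rho_hom[OF c assms(3,4), of ap am]
    by (simp add: gg_def rh_def inner_add_left)
qed

lemma DD_ray: assumes "\<forall>i. small i (V $ i)" "k \<in> K" "0 \<le> d" "d \<le> 1"
  shows "DD (d *\<^sub>R V) (d *\<^sub>R a) k = d * EE V a k + d^2 * BB V a k"
proof -
  have "gg i k ((d *\<^sub>R V) $ i) = d * gg i k (V $ i)" for i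
    using gg_hom[OF _ assms(2-4)] assms(1) by simp
  then show ?thesis unfolding DD_def EE_def BB_def
    by (simp add: sum_distrib_left sum.distrib[symmetric] power2_eq_square algebra_simps)
qed

lemma loss_ray: assumes "\<forall>i. small i (V $ i)" "0 \<le> d" "d \<le> 1"
  shows "loss ap am K xs ys (P + d *\<^sub>R (V,a)) - loss ap am K xs ys P
    = d * (\<Sum>k\<in>K. rr k * EE V a k)
    + d^2 * ((\<Sum>k\<in>K. rr k * BB V a k) + 1/2 * (\<Sum>k\<in>K. (EE V a k)^2))
    + d^3 * (\<Sum>k\<in>K. EE V a k * BB V a k) + d^4 * (1/2 * (\<Sum>k\<in>K. (BB V a k)^2))"
proof -
  have e: "P + d *\<^sub>R (V,a) = P + (d *\<^sub>R V, d *\<^sub>R a)" by simp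
  have pt: "rr k * DD (d *\<^sub>R V) (d *\<^sub>R a) k + 1/2 * (DD (d *\<^sub>R V) (d *\<^sub>R a) k)^2
     = d * (rr k * EE V a k) + d^2 * (rr k * BB V a k + 1/2 * (EE V a k)^2)
       + d^3 * (EE V a k * BB V a k) + d^4 * (1/2 * (BB V a k)^2)" if "k \<in> K" for k
    using DD_ray[OF assms(1) that assms(2,3)] by (simp add: power2_eq_square power3_eq_cube power4_eq_xxxx algebra_simps)
  have "loss ap am K xs ys (P + d *\<^sub>R (V,a)) - loss ap am K xs ys P
     = (\<Sum>k\<in>K. rr k * DD (d *\<^sub>R V) (d *\<^sub>R a) k + 1/2 * (DD (d *\<^sub>R V) (d *\<^sub>R a) k)^2)"
    unfolding e loss_shift by (simp add: sum.distrib sum_distrib_left)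
  also have "\<dots> = (\<Sum>k\<in>K. d * (rr k * EE V a k) + d^2 * (rr k * BB V a k + 1/2 * (EE V a k)^2)
       + d^3 * (EE V a k * BB V a k) + d^4 * (1/2 * (BB V a k)^2))"
    using pt by (rule sum.cong[OF refl])
  finally show ?thesis by (simp add: sum.distrib sum_distrib_left sum_divide_distrib distrib_left)
qed

lemma stat_c1: assumes "stationary_point (loss ap am K xs ys) P" "\<forall>i. small i (V $ i)"
  shows "(\<Sum>k\<in>K. rr k * EE V a k) \<ge> 0"
proof -
  define c1 where "c1 = (\<Sum>k\<in>K. rr k * EE V a k)"
  define c2 where "c2 = ((\<Sum>k\<in>K. rr k * BB V a k) + 1/2 * (\<Sum>k\<in>K. (EE V a k)^2))"
  define c3 where "c3 = (\<Sum>k\<in>K. EE V a k * BB V a k)"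
  define c4 where "c4 = (1/2 * (\<Sum>k\<in>K. (BB V a k)^2))"
  obtain g where g: "((\<lambda>\<alpha>. (loss ap am K xs ys (P + \<alpha> *\<^sub>R (V,a)) - loss ap am K xs ys P) / \<alpha>) \<longlongrightarrow> g) (at_right 0)" "g \<ge> 0"
    using assms(1) unfolding stationary_point_def by blast
  have ev: "\<forall>\<^sub>F \<alpha> in at_right 0. c1 + \<alpha> * c2 + \<alpha>^2 * c3 + \<alpha>^3 * c4
      = (loss ap am K xs ys (P + \<alpha> *\<^sub>R (V,a)) - loss ap am K xs ys P) / \<alpha>"
    unfolding eventually_at_right_field
  proof (intro exI[of _ 1] conjI allI impI)
    fix y :: real assume "0 < y" "y < 1"
    then show "c1 + y * c2 + y^2 * c3 + y^3 * c4 = (loss ap am K xs ys (P + y *\<^sub>R (V,a)) - loss ap am K xs ys P) / y"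
      using loss_ray[OF assms(2), of y a] unfolding c1_def c2_def c3_def c4_def
      by (simp add: field_simps power2_eq_square power3_eq_cube power4_eq_xxxx)
  qed simp
  have "((\<lambda>\<alpha>::real. c1 + \<alpha> * c2 + \<alpha>^2 * c3 + \<alpha>^3 * c4) \<longlongrightarrow> c1 + 0 * c2 + 0^2 * c3 + 0^3 * c4) (at_right 0)"
    by (intro tendsto_intros)
  then have "((\<lambda>\<alpha>::real. c1 + \<alpha> * c2 + \<alpha>^2 * c3 + \<alpha>^3 * c4) \<longlongrightarrow> c1) (at_right 0)" by simp
  from tendsto_cong[OF ev] this have "(( \<lambda>\<alpha>. (loss ap am K xs ys (P + \<alpha> *\<^sub>R (V,a)) - loss ap am K xs ys P) / \<alpha>) \<longlongrightarrow> c1) (at_right 0)" by simp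
  with g have "c1 = g" using tendsto_unique[OF trivial_limit_at_right_real] by blast
  with g(2) show ?thesis unfolding c1_def by simp
qed

end

theorem corollary1:
  fixes ap am :: real
    and K :: "'k set"
    and xs :: "'k \<Rightarrow> real^'d"
    and ys :: "'k \<Rightarrow> real"
    and P :: "(real^'d^'i) \<times> (real^'i)"
  assumes "CARD('d) > 1"
    and "ap \<noteq> am"
    and "finite K"
    and "stationary_point (loss ap am K xs ys) P"
    and "\<not> local_minimum (loss ap am K xs ys) P"
  shows "\<exists>l C. norm l = 1 \<and> C < 0 \<and>
    (\<forall>\<^sub>F \<delta> in at_right 0. loss ap am K xs ys (P + \<delta> *\<^sub>R l) - loss ap am K xs ys P < 0) \<and>
    (\<lambda>\<delta>. loss ap am K xs ys (P + \<delta> *\<^sub>R l) - loss ap am K xs ys P) \<sim>[at_right 0] (\<lambda>\<delta>. C * \<delta>^2)"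
proof -
  interpret N: netloc ap am K xs ys P .
  note stat = assms(4)
  let ?L = "loss ap am K xs ys"
  have small0: "N.small j 0" for j by (auto simp: N.small_def)
  have rowsmall: "\<forall>j. N.small j ((\<chi> j. if j = i then v else 0) $ j)" if "N.small i v" for i v
    using that small0 by auto
  have R0: "N.RR i = 0" for i
  proof -
    have E: "N.EE 0 (axis i s) k = s * N.rh i k" for s k
    proof -
      have "\<forall>j. snd P $ j * N.gg j k (0 $ j) + axis i s $ j * N.rh j k = (if j = i then s * N.rh i k else 0)"
        by (auto simp: axis_def)
      then show ?thesis unfolding N.EE_def by simp
    qed
    have "(\<Sum>k\<in>K. N.rr k * N.EE 0 (axis i s) k) \<ge> 0" for s
      by (rule N.stat_c1[OF stat]) (simp add: small0)
    from this[of 1] this[of "-1"] show ?thesis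
      unfolding E N.RR_def by (simp add: sum_negf)
  qed
  have hG: "snd P $ i * N.GG i v \<ge> 0" if sv: "N.small i v" for i v
  proof -
    have E: "N.EE (\<chi> j. if j = i then v else 0) 0 k = snd P $ i * N.gg i k v" for k
    proof -
      have "\<forall>j. snd P $ j * N.gg j k ((\<chi> j. if j = i then v else 0) $ j) + 0 $ j * N.rh j k = (if j = i then snd P $ i * N.gg i k v else 0)"
        by auto
      then show ?thesis unfolding N.EE_def by simp
    qed
    have "(\<Sum>k\<in>K. N.rr k * N.EE (\<chi> j. if j = i then v else 0) 0 k) \<ge> 0"
      by (rule N.stat_c1[OF stat rowsmall[OF sv]])
    then show ?thesis unfolding E N.GG_def by (simp add: sum_distrib_left algebra_simps)
  qed
  show ?thesis
  proof (cases "\<exists>i v. snd P $ i = 0 \<and> N.small i v \<and> N.GG i v \<noteq> 0")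
    case False
    have "local_minimum ?L P"
    proof -
      have ev1: "\<forall>\<^sub>F Q in at P. \<forall>i. N.small i (fst Q $ i - fst P $ i)"
      proof (rule eventually_all_finite)
        fix i
        show "\<forall>\<^sub>F Q in at P. N.small i (fst Q $ i - fst P $ i)"
          unfolding N.small_def
        proof (rule eventually_ball_finite[OF assms(3)], intro ballI)
          fix k assume "k \<in> K"
          show "\<forall>\<^sub>F Q in at P. fst P $ i \<bullet> xs k = 0 \<or> \<bar>(fst Q $ i - fst P $ i) \<bullet> xs k\<bar> < \<bar>fst P $ i \<bullet> xs k\<bar>"
          proof (cases "fst P $ i \<bullet> xs k = 0")
            case True then show ?thesis by simp
          next
            case False
            have "((\<lambda>Q. \<bar>(fst Q $ i - fst P $ i) \<bullet> xs k\<bar>) \<longlongrightarrow> \<bar>(fst P $ i - fst P $ i) \<bullet> xs k\<bar>) (at P)"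
              by (intro tendsto_intros)
            then have "((\<lambda>Q. \<bar>(fst Q $ i - fst P $ i) \<bullet> xs k\<bar>) \<longlongrightarrow> 0) (at P)" by simp
            from order_tendstoD(2)[OF this] False
            have "\<forall>\<^sub>F Q in at P. \<bar>(fst Q $ i - fst P $ i) \<bullet> xs k\<bar> < \<bar>fst P $ i \<bullet> xs k\<bar>" by simp
            then show ?thesis by (rule eventually_mono) simp
          qed
        qed
      qed
      have ev2: "\<forall>\<^sub>F Q in at P. \<forall>i. snd P $ i \<noteq> 0 \<longrightarrow> \<bar>snd Q $ i - snd P $ i\<bar> < \<bar>snd P $ i\<bar>"
      proof (rule eventually_all_finite)
        fix i
        show "\<forall>\<^sub>F Q in at P. snd P $ i \<noteq> 0 \<longrightarrow> \<bar>snd Q $ i - snd P $ i\<bar> < \<bar>snd P $ i\<bar>"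
        proof (cases "snd P $ i = 0")
          case True then show ?thesis by simp
        next
          case F: False
          have "((\<lambda>Q. \<bar>snd Q $ i - snd P $ i\<bar>) \<longlongrightarrow> \<bar>snd P $ i - snd P $ i\<bar>) (at P)"
            by (intro tendsto_intros)
          then have "((\<lambda>Q. \<bar>snd Q $ i - snd P $ i\<bar>) \<longlongrightarrow> 0) (at P)" by simp
          from order_tendstoD(2)[OF this] F
          show ?thesis by (auto elim: eventually_mono)
        qed
      qed
      have "\<forall>\<^sub>F Q in at P. ?L P \<le> ?L Q"
        using ev1 ev2
      proof eventually_elim
        case (elim Q)
        define V where "V = fst Q - fst P"
        define a where "a = snd Q - snd P"
        have Qe: "Q = P + (V, a)" unfolding V_def a_def by (simp add: prod_eq_iff)
        have trm: "(snd P $ i + a $ i) * N.GG i (V $ i) \<ge> 0" for i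
        proof (cases "snd P $ i = 0")
          case True
          have "N.small i (V $ i)" using elim(1) unfolding V_def by simp
          then have "N.GG i (V $ i) = 0" using False True by blast
          then show ?thesis by simp
        next
          case F: False
          have lt: "\<bar>a $ i\<bar> < \<bar>snd P $ i\<bar>" using elim(2) F unfolding a_def by simp
          have hg: "snd P $ i * N.GG i (V $ i) \<ge> 0" using hG elim(1) unfolding V_def by simp
          show ?thesis
          proof (cases "snd P $ i > 0")
            case True
            then have "N.GG i (V $ i) \<ge> 0" using hg by (simp add: zero_le_mult_iff)
            moreover have "snd P $ i + a $ i > 0" using lt True by linarith
            ultimately show ?thesis by simp
          next
            case F2: False
            then have "snd P $ i < 0" using F by simp
            then have "N.GG i (V $ i) \<le> 0" using hg by (simp add: zero_le_mult_iff)
            moreover have "snd P $ i + a $ i < 0" using lt \<open>snd P $ i < 0\<close> by linarith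
            ultimately show ?thesis by (simp add: mult_nonpos_nonpos)
          qed
        qed
        have "?L Q - ?L P = (\<Sum>i\<in>UNIV. (snd P $ i + a $ i) * N.GG i (V $ i)) + 1/2 * (\<Sum>k\<in>K. (N.DD V a k)^2)"
          unfolding Qe N.loss_shift N.lin_part by (simp add: R0)
        also have "\<dots> \<ge> 0" using trm by (intro add_nonneg_nonneg sum_nonneg) (auto intro!: mult_nonneg_nonneg sum_nonneg)
        finally show ?case by simp
      qed
      then obtain e where e: "e > 0" "\<And>Q. Q \<noteq> P \<Longrightarrow> dist Q P < e \<Longrightarrow> ?L P \<le> ?L Q"
        unfolding eventually_at by auto
      show ?thesis unfolding local_minimum_def
        using e by (intro exI[of _ e]) (metis order_refl)
    qed
    with assms(5) show ?thesis by contradiction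
  next
    case True
    then obtain i v where h0: "snd P $ i = 0" and sv: "N.small i v" and gv: "N.GG i v \<noteq> 0" by blast
    define S where "S = (\<Sum>k\<in>K. (N.rh i k)^2)"
    have S0: "S \<ge> 0" unfolding S_def by (simp add: sum_nonneg)
    define t where "t = - N.GG i v / (1 + S)"
    have t0: "t \<noteq> 0" using gv S0 unfolding t_def by simp
    define V0 :: "real^'d^'i" where "V0 = (\<chi> j. if j = i then v else 0)"
    define a0 :: "real^'i" where "a0 = axis i t"
    have rs: "\<forall>j. N.small j (V0 $ j)" unfolding V0_def by (rule rowsmall[OF sv])
    have E: "N.EE V0 a0 k = t * N.rh i k" for k
    proof -
      have "\<forall>j. snd P $ j * N.gg j k (V0 $ j) + a0 $ j * N.rh j k = (if j = i then t * N.rh i k else 0)"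
        by (auto simp: V0_def a0_def axis_def h0)
      then show ?thesis unfolding N.EE_def by simp
    qed
    have B: "N.BB V0 a0 k = t * N.gg i k v" for k
    proof -
      have "\<forall>j. a0 $ j * N.gg j k (V0 $ j) = (if j = i then t * N.gg i k v else 0)"
        by (auto simp: V0_def a0_def axis_def)
      then show ?thesis unfolding N.BB_def by simp
    qed
    define c1 where "c1 = (\<Sum>k\<in>K. N.rr k * N.EE V0 a0 k)"
    define c2 where "c2 = ((\<Sum>k\<in>K. N.rr k * N.BB V0 a0 k) + 1/2 * (\<Sum>k\<in>K. (N.EE V0 a0 k)^2))"
    define c3 where "c3 = (\<Sum>k\<in>K. N.EE V0 a0 k * N.BB V0 a0 k)"
    define c4 where "c4 = (1/2 * (\<Sum>k\<in>K. (N.BB V0 a0 k)^2))"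
    have c1z: "c1 = 0" unfolding c1_def E using R0[of i] unfolding N.RR_def
      by (simp add: sum_distrib_left[symmetric] algebra_simps)
    have c2e: "c2 = t * N.GG i v + 1/2 * t^2 * S"
      unfolding c2_def E B N.GG_def S_def by (simp add: sum_distrib_left power_mult_distrib algebra_simps)
    have c2n: "c2 < 0"
    proof -
      have "c2 * (1 + S)^2 = -((N.GG i v)^2 * (1 + S/2))"
      proof -
        have ts: "t * (1 + S) = - N.GG i v" unfolding t_def using S0 by (simp add: field_simps)
        have "c2 * (1 + S)^2 = (t * (1 + S)) * N.GG i v * (1 + S) + 1/2 * (t * (1 + S))^2 * S"
          unfolding c2e by (simp add: power2_eq_square algebra_simps)
        also have "\<dots> = -((N.GG i v)^2 * (1 + S/2))" unfolding ts by (simp add: power2_eq_square algebra_simps)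
        finally show ?thesis .
      qed
      moreover have "-((N.GG i v)^2 * (1 + S/2)) < 0" using gv S0
        by (simp add: mult_pos_pos)
      ultimately have "c2 * (1 + S)^2 < 0" by simp
      then show ?thesis using S0 by (simp add: mult_less_0_iff)
    qed
    define u where "u = (V0, a0)"
    have u0: "u \<noteq> 0"
    proof
      assume "u = 0"
      then have "a0 = 0" unfolding u_def by (simp add: zero_prod_def)
      then have "a0 $ i = 0" by simp
      then show False using t0 unfolding a0_def by (simp add: axis_def)
    qed
    define N where "N = norm u"
    have N0: "N > 0" using u0 unfolding N_def by simp
    define l where "l = (1 / N) *\<^sub>R u"
    have nl: "norm l = 1" unfolding l_def N_def using u0 by simp
    define C where "C = c2 / N^2"
    have Cn: "C < 0" unfolding C_def using c2n N0 by (simp add: divide_neg_pos)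
    define q where "q = (\<lambda>\<delta>::real. C + (c3 / N^3) * \<delta> + (c4 / N^4) * \<delta>^2)"
    have fe: "\<forall>\<^sub>F \<delta> in at_right 0. ?L (P + \<delta> *\<^sub>R l) - ?L P = \<delta>^2 * q \<delta>"
      unfolding eventually_at_right_field
    proof (intro exI[of _ N] conjI allI impI)
      fix y :: real assume y: "0 < y" "y < N"
      have "P + y *\<^sub>R l = P + (y / N) *\<^sub>R (V0, a0)" unfolding l_def u_def by simp
      then have "?L (P + y *\<^sub>R l) - ?L P = (y/N) * c1 + (y/N)^2 * c2 + (y/N)^3 * c3 + (y/N)^4 * c4"
        using N.loss_ray[OF rs, of "y/N" a0] y unfolding c1_def c2_def c3_def c4_def by simp
      also have "\<dots> = y^2 * q y" unfolding q_def C_def c1z using N0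
        by (simp add: field_simps power2_eq_square power3_eq_cube power4_eq_xxxx)
      finally show "?L (P + y *\<^sub>R l) - ?L P = y^2 * q y" .
    qed (use N0 in simp)
    have qt: "(q \<longlongrightarrow> C) (at_right 0)"
    proof -
      have "(q \<longlongrightarrow> C + (c3 / N^3) * 0 + (c4 / N^4) * 0^2) (at_right 0)"
        unfolding q_def by (intro tendsto_intros)
      then show ?thesis by simp
    qed
    have neg: "\<forall>\<^sub>F \<delta> in at_right 0. ?L (P + \<delta> *\<^sub>R l) - ?L P < 0"
      using fe order_tendstoD(2)[OF qt Cn] eventually_at_right_less[of "0::real"]
    proof eventually_elim
      case (elim y)
      then show ?case by (simp add: mult_pos_neg)
    qed
    have "(\<lambda>\<delta>. \<delta>^2 * q \<delta>) \<sim>[at_right 0] (\<lambda>\<delta>. C * \<delta>^2)"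
    proof (rule asymp_equivI')
      have "((\<lambda>\<delta>. q \<delta> / C) \<longlongrightarrow> C / C) (at_right 0)" using qt using Cn by (intro tendsto_intros) simp_all
      then have l1: "((\<lambda>\<delta>. q \<delta> / C) \<longlongrightarrow> 1) (at_right 0)" using Cn by simp
      have "\<forall>\<^sub>F \<delta> in at_right 0. q \<delta> / C = \<delta>^2 * q \<delta> / (C * \<delta>^2)"
        using eventually_at_right_less[of "0::real"] by eventually_elim (use Cn in simp)
      from tendsto_cong[OF this] l1 show "((\<lambda>\<delta>. \<delta>^2 * q \<delta> / (C * \<delta>^2)) \<longlongrightarrow> 1) (at_right 0)" by simp
    qed
    then have "(\<lambda>\<delta>. ?L (P + \<delta> *\<^sub>R l) - ?L P) \<sim>[at_right 0] (\<lambda>\<delta>. C * \<delta>^2)"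
      using asymp_equiv_cong[OF fe, of "\<lambda>\<delta>. C * \<delta>^2" "\<lambda>\<delta>. C * \<delta>^2"] by simp
    then show ?thesis using nl Cn neg by blast
  qed
qed

end
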